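(* Let $\lambda\in P_+$ and let $x$ be a finite-dimensional nilpotent $\Lambda$-submodule of $q_\lambda$ (i.e. $x\in\Lambda^\lambda_\beta$ for some $\beta$, identified with a submodule of $q_\lambda$). Let $i,j\in I$ (not necessarily distinct) and let $y$ be a submodule of $q_\lambda$ containing $x$ with $y/x\cong s_j$. Then $$\varphi_i(y)-\varepsilon_i(y)=\varphi_i(x)-\varepsilon_i(x)-a_{ij}.$$
   Context: $\Gamma$ is a finite graph without loops with vertex set $I$; $a_{ii}=2$, and $-a_{ij}$ is the number of edges between $i\ne j$. $\Lambda$ is the preprojective algebra of $\Gamma$ over $\mathbb C$, $s_i$ the simple module at $i$, $q_i$ its injective hull. For a dominant integral weight $\lambda$ of the Kac–Moody algebra of $\Gamma$ (with simple roots $\alpha_i$ and symmetric form $(\alpha_i;\alpha_j)=a_{ij}$), $q_\lambda=\bigoplus_i q_i^{\oplus(\lambda;\alpha_i)}$. A finite-dimensional module is nilpotent if all its composition factors are among the $s_i$. For a submodule $x$ of $q_\lambda$: $\varepsilon_i(x)$ is the multiplicity of $s_i$ in the head (top) of $x$, and $\varphi_i(x)$ is the multiplicity of $s_i$ in the socle of $q_\lambda/x$. *)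

theory Defs
  imports Complex_Main "HOL-Library.Function_Algebras"
begin

(* Graph Gamma: vertex type 'i (finite), generalized Cartan matrix A :: 'i => 'i => int,
   A i i = 2, -A i j = number of edges between i and j (i ~= j). *)
definition is_graph_cartan :: "('i::{finite,linorder} \<Rightarrow> 'i \<Rightarrow> int) \<Rightarrow> bool" where
  "is_graph_cartan A \<longleftrightarrow> (\<forall>i. A i i = 2) \<and> (\<forall>i j. i \<noteq> j \<longrightarrow> A i j \<le> 0)
      \<and> (\<forall>i j. A i j = A j i)"

(* Arrows of the double quiver: (s, t, m) is the m-th arrow from s to t, m < number of edges. *)
type_synonym 'i arrow = "'i \<times> 'i \<times> nat"
type_synonym 'i path = "'i arrow list"

definition is_arrow :: "('i \<Rightarrow> 'i \<Rightarrow> int) \<Rightarrow> 'i arrow \<Rightarrow> bool" where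
  "is_arrow A b \<longleftrightarrow> (case b of (s, t, m) \<Rightarrow> s \<noteq> t \<and> m < nat (- A s t))"

definition src :: "'i arrow \<Rightarrow> 'i" where "src b = fst b"
definition tgt :: "'i arrow \<Rightarrow> 'i" where "tgt b = fst (snd b)"

definition rev_arrow :: "'i arrow \<Rightarrow> 'i arrow" where
  "rev_arrow b = (case b of (s, t, m) \<Rightarrow> (t, s, m))"

definition eps :: "'i::linorder arrow \<Rightarrow> complex" where
  "eps b = (if src b < tgt b then 1 else -1)"

definition arrows_from :: "('i \<Rightarrow> 'i \<Rightarrow> int) \<Rightarrow> 'i \<Rightarrow> 'i arrow set" where
  "arrows_from A v = {b. is_arrow A b \<and> src b = v}"

definition arrows_into :: "('i \<Rightarrow> 'i \<Rightarrow> int) \<Rightarrow> 'i \<Rightarrow> 'i arrow set" where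
  "arrows_into A v = {b. is_arrow A b \<and> tgt b = v}"

fun is_path :: "('i \<Rightarrow> 'i \<Rightarrow> int) \<Rightarrow> 'i \<Rightarrow> 'i \<Rightarrow> 'i path \<Rightarrow> bool" where
  "is_path A k l [] = (k = l)"
| "is_path A k l (b # p) = (src b = k \<and> is_arrow A b \<and> is_path A (tgt b) l p)"

(* The injective hull q_i of s_i (nilpotent Lambda-modules), as a representation:
   q_i(k) = graded dual of (paths from k to i modulo the preprojective relations),
   i.e. linear functionals on paths k -> i, vanishing on the two-sided ideal generated by
   the preprojective relations  sum_{b : src b = v} eps b * b b^*,  and vanishing on all
   paths of length > N for some N. *)
definition qhull :: "('i::{finite,linorder} \<Rightarrow> 'i \<Rightarrow> int) \<Rightarrow> 'i \<Rightarrow> 'i \<Rightarrow> ('i path \<Rightarrow> complex) set" where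
  "qhull A i k = {f. (\<forall>p. f p \<noteq> 0 \<longrightarrow> is_path A k i p)
                    \<and> (\<exists>N. \<forall>p. N < length p \<longrightarrow> f p = 0)
                    \<and> (\<forall>p v q. (\<Sum>b\<in>arrows_from A v. eps b * f (p @ [b, rev_arrow b] @ q)) = 0)}"

(* elements of q_lambda at vertex k: lam i = (lambda ; alpha_i) copies of q_i, indexed by (i, r) *)
type_synonym 'i qelem = "'i \<times> nat \<Rightarrow> 'i path \<Rightarrow> complex"

definition qlam :: "('i::{finite,linorder} \<Rightarrow> 'i \<Rightarrow> int) \<Rightarrow> ('i \<Rightarrow> nat) \<Rightarrow> 'i \<Rightarrow> 'i qelem set" where
  "qlam A lam k = {F. \<forall>i r. (r < lam i \<longrightarrow> F (i, r) \<in> qhull A i k) \<and> (\<not> r < lam i \<longrightarrow> F (i, r) = 0)}"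

definition act :: "'i arrow \<Rightarrow> 'i qelem \<Rightarrow> 'i qelem" where
  "act b F = (\<lambda>ir p. F ir (b # p))"

definition sc :: "complex \<Rightarrow> 'i qelem \<Rightarrow> 'i qelem" where
  "sc c F = (\<lambda>ir p. c * F ir p)"

abbreviation cdim :: "'i qelem set \<Rightarrow> nat" where
  "cdim \<equiv> vector_space.dim sc"

abbreviation cspan :: "'i qelem set \<Rightarrow> 'i qelem set" where
  "cspan \<equiv> module.span sc"

definition is_submodule :: "('i::{finite,linorder} \<Rightarrow> 'i \<Rightarrow> int) \<Rightarrow> ('i \<Rightarrow> nat) \<Rightarrow> ('i \<Rightarrow> 'i qelem set) \<Rightarrow> bool" where
  "is_submodule A lam X \<longleftrightarrow> (\<forall>k. X k \<subseteq> qlam A lam k \<and> module.subspace sc (X k))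
      \<and> (\<forall>b. is_arrow A b \<longrightarrow> act b ` X (src b) \<subseteq> X (tgt b))"

definition fin_dim_module :: "('i \<Rightarrow> 'i qelem set) \<Rightarrow> bool" where
  "fin_dim_module X \<longleftrightarrow> (\<forall>k. \<exists>B. finite B \<and> B \<subseteq> X k \<and> cspan B = X k)"

(* nilpotent: every composition factor is some s_i; for a finite-dimensional representation
   this is: some path length N such that all paths of length >= N act by zero *)
definition nilpotent_module :: "('i::{finite,linorder} \<Rightarrow> 'i \<Rightarrow> int) \<Rightarrow> ('i \<Rightarrow> 'i qelem set) \<Rightarrow> bool" where
  "nilpotent_module A X \<longleftrightarrow> (\<exists>N. \<forall>p k l. is_path A k l p \<and> N \<le> length p \<longrightarrow>
       (\<forall>F\<in>X k. fold act p F = 0))"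

(* epsilon_i(x): multiplicity of s_i in the head of x = dim x_i - dim (rad x)_i *)
definition epsi :: "('i \<Rightarrow> 'i \<Rightarrow> int) \<Rightarrow> ('i \<Rightarrow> 'i qelem set) \<Rightarrow> 'i \<Rightarrow> int" where
  "epsi A X i = int (cdim (X i)) - int (cdim (cspan (\<Union>b\<in>arrows_into A i. act b ` X (src b))))"

(* phi_i(x): multiplicity of s_i in the socle of q_lambda / x *)
definition phii :: "('i::{finite,linorder} \<Rightarrow> 'i \<Rightarrow> int) \<Rightarrow> ('i \<Rightarrow> nat) \<Rightarrow> ('i \<Rightarrow> 'i qelem set) \<Rightarrow> 'i \<Rightarrow> int" where
  "phii A lam X i = int (cdim {F \<in> qlam A lam i. \<forall>b\<in>arrows_from A i. act b F \<in> X (tgt b)})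
                    - int (cdim (X i))"

end

theory Submission
  imports Defs
begin

context vector_space begin

lemma indep_union_mod:
  assumes T: "independent T" and G: "finite G"
    and M: "\<And>c. (\<Sum>g\<in>G. c g *s g) \<in> span T \<Longrightarrow> \<forall>g\<in>G. c g = 0"
  shows "independent (T \<union> G)" "T \<inter> G = {}"
proof -
  show "T \<inter> G = {}"
  proof (rule ccontr)
    assume "T \<inter> G \<noteq> {}" then obtain g where g: "g \<in> T" "g \<in> G" by auto
    have "(\<Sum>h\<in>G. (if h = g then 1 else 0) *s h) = (\<Sum>h\<in>G. if h = g then h else 0)"
      by (rule sum.cong) auto
    also have "\<dots> = g" using G g by simp
    finally have "(\<Sum>h\<in>G. (if h = g then 1 else 0) *s h) \<in> span T" using g span_base by simp
    from M[OF this] g show False by auto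
  qed
  show "independent (T \<union> G)"
    unfolding independent_explicit_module
  proof (intro allI impI)
    fix t u v assume t: "finite t" "t \<subseteq> T \<union> G" and s0: "(\<Sum>v\<in>t. u v *s v) = 0" and v: "v \<in> t"
    let ?c = "\<lambda>g. if g \<in> t then u g else 0"
    have e1: "(\<Sum>g\<in>G. ?c g *s g) = (\<Sum>g\<in>t \<inter> G. u g *s g)"
    proof -
      have "(\<Sum>g\<in>G. ?c g *s g) = (\<Sum>g\<in>G. if g \<in> t then u g *s g else 0)"
        by (rule sum.cong) auto
      also have "\<dots> = (\<Sum>g\<in>G \<inter> t. u g *s g)" using G by (simp add: sum.inter_restrict)
      finally show ?thesis by (simp add: Int_commute)
    qed
    have split: "(\<Sum>v\<in>t. u v *s v) = (\<Sum>g\<in>t \<inter> G. u g *s g) + (\<Sum>g\<in>t - G. u g *s g)"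
      using t(1) by (metis sum.Int_Diff)
    have "(\<Sum>g\<in>t - G. u g *s g) \<in> span T"
      using t by (intro span_sum span_scale span_base) auto
    then have "- (\<Sum>g\<in>t - G. u g *s g) \<in> span T" by (rule span_neg)
    moreover have "(\<Sum>g\<in>t \<inter> G. u g *s g) = - (\<Sum>g\<in>t - G. u g *s g)"
      using split s0 by (simp add: eq_neg_iff_add_eq_0)
    ultimately have "(\<Sum>g\<in>G. ?c g *s g) \<in> span T" using e1 by simp
    from M[OF this] have cz: "\<forall>g\<in>G. ?c g = 0" .
    then have z1: "\<forall>g\<in>t \<inter> G. u g = 0" by auto
    then have "(\<Sum>g\<in>t \<inter> G. u g *s g) = 0" by simp
    with split s0 have "(\<Sum>g\<in>t - G. u g *s g) = 0" by simp
    show "u v = 0"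
    proof (cases "v \<in> G")
      case True with z1 v show ?thesis by auto
    next
      case False
      show ?thesis
        using independentD[OF T, of "t - G" u v] t False v \<open>(\<Sum>g\<in>t - G. u g *s g) = 0\<close> by auto
    qed
  qed
qed

lemma fd_basis:
  assumes "subspace C" "C \<subseteq> span C0" "finite C0"
  obtains B where "finite B" "B \<subseteq> C" "independent B" "span B = C" "card B = dim C"
proof -
  obtain B where B: "B \<subseteq> C" "independent B" "C \<subseteq> span B"
    using maximal_independent_subset[of C] by blast
  have "finite B" using independent_span_bound[OF assms(3) B(2)] B(1) assms(2) by auto
  moreover have "span B = C" using B assms(1) span_minimal[of B C] span_subspace by blast
  moreover have "card B = dim C" using basis_card_eq_dim B by blast
  ultimately show ?thesis using that B by blast
qed

end

context vector_space_pair begin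

lemma rrn:
  assumes lin: "Vector_Spaces.linear s1 s2 g"
    and C: "vs1.subspace C" "C \<subseteq> vs1.span C0" "finite C0"
    and R: "vs2.subspace R" "R \<subseteq> vs2.span R0" "finite R0"
  shows "vs2.dim (vs2.span (R \<union> g ` C)) + vs1.dim {c\<in>C. g c \<in> R} = vs2.dim R + vs1.dim C"
proof -
  define W where "W = {c\<in>C. g c \<in> R}"
  have Wsub: "vs1.subspace W"
    unfolding W_def vs1.subspace_def
    using C(1) R(1) linear_add[OF lin] linear_scale[OF lin] linear_0[OF lin]
    unfolding vs1.subspace_def vs2.subspace_def by auto
  have WC: "W \<subseteq> C" unfolding W_def by auto
  obtain BW where BW: "finite BW" "BW \<subseteq> W" "vs1.independent BW" "vs1.span BW = W" "card BW = vs1.dim W"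
    using vs1.fd_basis[OF Wsub _ C(3), of] WC C(2) by (metis order_trans)
  obtain BC where BC: "BW \<subseteq> BC" "BC \<subseteq> C" "vs1.independent BC" "C \<subseteq> vs1.span BC"
    using vs1.maximal_independent_subset_extend[of BW C] BW WC by blast
  have fBC: "finite BC" using vs1.independent_span_bound[OF C(3) BC(3)] BC(2) C(2) by auto
  have cBC: "card BC = vs1.dim C" using vs1.basis_card_eq_dim BC by blast
  have spBC: "vs1.span BC = C" using BC C(1) vs1.span_minimal[of BC C] vs1.span_subspace by blast
  obtain T where T: "finite T" "T \<subseteq> R" "vs2.independent T" "vs2.span T = R" "card T = vs2.dim R"
    using vs2.fd_basis[OF R] by blast
  define D where "D = BC - BW"
  have fD: "finite D" using fBC D_def by auto
  have key: "\<forall>d\<in>D. a d = 0" if ga: "g (\<Sum>d\<in>D. a d *a d) \<in> R" for a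
  proof -
    let ?w = "\<Sum>d\<in>D. a d *a d"
    have "?w \<in> vs1.span BC" unfolding D_def by (intro vs1.span_sum vs1.span_scale vs1.span_base) auto
    then have "?w \<in> W" using spBC ga W_def by auto
    then have "?w \<in> vs1.span BW" using BW by auto
    then obtain e where e: "?w = (\<Sum>b\<in>BW. e b *a b)" using vs1.span_finite[OF BW(1)] by auto
    define u where "u = (\<lambda>x. if x \<in> D then a x else - e x)"
    have BCu: "BC = D \<union> BW" "D \<inter> BW = {}" using BC(1) D_def by auto
    have "(\<Sum>x\<in>BC. u x *a x) = (\<Sum>x\<in>D. u x *a x) + (\<Sum>x\<in>BW. u x *a x)"
      using BCu fD BW(1) by (simp add: sum.union_disjoint)
    also have "(\<Sum>x\<in>D. u x *a x) = ?w" unfolding u_def by (rule sum.cong) auto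
    also have "(\<Sum>x\<in>BW. u x *a x) = - (\<Sum>b\<in>BW. e b *a b)"
    proof -
      have "(\<Sum>x\<in>BW. u x *a x) = (\<Sum>x\<in>BW. - (e x *a x))"
        unfolding u_def using BCu by (intro sum.cong) (auto simp: vs1.scale_minus_left)
      then show ?thesis by (simp add: sum_negf)
    qed
    finally have "(\<Sum>x\<in>BC. u x *a x) = 0" using e by simp
    then have "\<forall>x\<in>BC. u x = 0" using vs1.independentD[OF BC(3) fBC order_refl] by blast
    then show ?thesis unfolding u_def D_def by auto
  qed
  have inj: "inj_on g D"
  proof (rule inj_onI, rule ccontr)
    fix d1 d2 assume d: "d1 \<in> D" "d2 \<in> D" "g d1 = g d2" "d1 \<noteq> d2"
    have "g (d1 - d2) = 0" using d linear_diff[OF lin] by simp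
    moreover have "d1 - d2 \<in> C" using d BC(2) C(1) D_def vs1.subspace_diff by blast
    ultimately have "d1 - d2 \<in> W" using W_def R(1) vs2.subspace_0 by auto
    then have "d1 - d2 \<in> vs1.span BW" using BW by auto
    then have "d1 - d2 \<in> vs1.span (BC - {d1})"
      using vs1.span_mono[of BW "BC - {d1}"] d D_def BC(1) by auto
    moreover have "d2 \<in> vs1.span (BC - {d1})" using d D_def by (intro vs1.span_base) auto
    ultimately have "(d1 - d2) + d2 \<in> vs1.span (BC - {d1})" by (rule vs1.span_add)
    then have "d1 \<in> vs1.span (BC - {d1})" by simp
    then have "vs1.dependent BC" using d D_def vs1.dependent_def by auto
    then show False using BC(3) by simp
  qed
  have modind: "\<forall>y\<in>g ` D. c y = 0" if cs: "(\<Sum>y\<in>g ` D. c y *b y) \<in> vs2.span T" for c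
  proof -
    have "(\<Sum>y\<in>g ` D. c y *b y) = (\<Sum>d\<in>D. c (g d) *b g d)" by (rule sum.reindex[OF inj, unfolded comp_def])
    also have "\<dots> = g (\<Sum>d\<in>D. c (g d) *a d)"
      by (simp add: linear_sum[OF lin] linear_scale[OF lin])
    finally have "g (\<Sum>d\<in>D. c (g d) *a d) \<in> R" using cs T by simp
    from key[OF this] show ?thesis by auto
  qed
  have fgD: "finite (g ` D)" using fD by simp
  note MI = vs2.indep_union_mod[OF T(3) fgD modind]
  have sp: "vs2.span (R \<union> g ` C) = vs2.span (T \<union> g ` D)"
  proof
    show "vs2.span (R \<union> g ` C) \<subseteq> vs2.span (T \<union> g ` D)"
    proof (rule vs2.span_minimal[OF _ vs2.subspace_span])
      have "R \<subseteq> vs2.span (T \<union> g ` D)" using T(4) vs2.span_mono[of T "T \<union> g ` D"] by auto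
      moreover have "g ` C \<subseteq> vs2.span (T \<union> g ` D)"
      proof -
        have "g ` BC \<subseteq> vs2.span (T \<union> g ` D)"
        proof
          fix y assume "y \<in> g ` BC"
          then obtain b where b: "b \<in> BC" "y = g b" by auto
          show "y \<in> vs2.span (T \<union> g ` D)"
          proof (cases "b \<in> BW")
            case True then have "y \<in> R" using b BW(2) W_def by auto
            then show ?thesis using \<open>R \<subseteq> vs2.span (T \<union> g ` D)\<close> by auto
          next
            case False then have "y \<in> g ` D" using b D_def by auto
            then show ?thesis by (intro vs2.span_base) auto
          qed
        qed
        then have "vs2.span (g ` BC) \<subseteq> vs2.span (T \<union> g ` D)"
          by (rule vs2.span_minimal[OF _ vs2.subspace_span])
        moreover have "g ` C \<subseteq> vs2.span (g ` BC)"
          using linear_span_image[OF lin, of BC] BC(4) by auto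
        ultimately show ?thesis by auto
      qed
      ultimately show "R \<union> g ` C \<subseteq> vs2.span (T \<union> g ` D)" by auto
    qed
    show "vs2.span (T \<union> g ` D) \<subseteq> vs2.span (R \<union> g ` C)"
      using T(2) BC(2) D_def by (intro vs2.span_mono) auto
  qed
  have "vs2.dim (vs2.span (R \<union> g ` C)) = card (T \<union> g ` D)"
    using sp MI(1) vs2.dim_span vs2.dim_eq_card_independent by metis
  also have "\<dots> = card T + card D" using MI(2) T(1) fgD card_image[OF inj] by (simp add: card_Un_disjoint)
  also have "card D = card BC - card BW" using D_def BC(1) BW(1) by (simp add: card_Diff_subset)
  finally show ?thesis
    using T(5) cBC BW(5) W_def card_mono[OF fBC BC(1)] by simp
qed

end

lemma sum_app: "(\<Sum>x\<in>S. f x) a = (\<Sum>x\<in>S. f x a)"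
  by (induction S rule: infinite_finite_induct) auto

lemma sc_app[simp]: "sc c F ir p = c * F ir p" by (simp add: sc_def)
lemma act_app[simp]: "act b F ir p = F ir (b # p)" by (simp add: act_def)

lemma vs_sc: "vector_space (sc :: complex \<Rightarrow> 'i qelem \<Rightarrow> 'i qelem)"
  by unfold_locales (auto simp: sc_def fun_eq_iff algebra_simps)

definition scn :: "complex \<Rightarrow> (nat \<Rightarrow> complex) \<Rightarrow> (nat \<Rightarrow> complex)" where
  "scn c f = (\<lambda>m. c * f m)"

lemma vs_scn: "vector_space scn"
  by unfold_locales (auto simp: scn_def fun_eq_iff algebra_simps)

lemma vs_c: "vector_space ((times) :: complex \<Rightarrow> complex \<Rightarrow> complex)"
  by unfold_locales (auto simp: algebra_simps)

interpretation Q: vector_space "sc :: complex \<Rightarrow> 'i qelem \<Rightarrow> 'i qelem" by (rule vs_sc)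
interpretation N: vector_space scn by (rule vs_scn)
interpretation QN: vector_space_pair "sc :: complex \<Rightarrow> 'i qelem \<Rightarrow> 'i qelem" scn ..
interpretation NQ: vector_space_pair scn "sc :: complex \<Rightarrow> 'i qelem \<Rightarrow> 'i qelem" ..
interpretation QC: vector_space_pair "sc :: complex \<Rightarrow> 'i qelem \<Rightarrow> 'i qelem" "(times) :: complex \<Rightarrow> complex \<Rightarrow> complex"
  by unfold_locales (auto simp: algebra_simps)

lemma act_lin: "Vector_Spaces.linear sc sc (act b)"
  unfolding Vector_Spaces.linear_iff using vs_sc by (auto simp: fun_eq_iff)

lemma act_add: "act b (F + G) = act b F + act b G" by (auto simp: fun_eq_iff)
lemma act_sc: "act b (sc c F) = sc c (act b F)" by (auto simp: fun_eq_iff)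
lemma act_0[simp]: "act b 0 = 0" by (auto simp: fun_eq_iff)
lemma act_diff: "act b (F - G) = act b F - act b G" by (auto simp: fun_eq_iff)
lemma act_sum: "act b (\<Sum>x\<in>S. f x) = (\<Sum>x\<in>S. act b (f x))"
  by (auto simp: fun_eq_iff sum_app)

lemma test: "cdim (S::'i qelem set) = Q.dim S" by simp
lemma test2: "cspan (S::'i qelem set) = Q.span S" by simp

lemma finite_arrows_from: "finite (arrows_from (A::'i::{finite,linorder} \<Rightarrow> 'i \<Rightarrow> int) i)"
proof -
  have "arrows_from A i \<subseteq> (\<Union>t\<in>UNIV. (\<lambda>m. (i, t, m)) ` {..<nat (- A i t)})"
    by (force simp: arrows_from_def is_arrow_def src_def)
  moreover have "finite (\<Union>t\<in>(UNIV::'i::{finite,linorder} set). (\<lambda>m. (i, t, m)) ` {..<nat (- A i t)})" by auto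
  ultimately show ?thesis by (rule finite_subset)
qed

lemma finite_arrows_into: "finite (arrows_into (A::'i::{finite,linorder} \<Rightarrow> 'i \<Rightarrow> int) i)"
proof -
  have "arrows_into A i \<subseteq> (\<Union>s\<in>UNIV. (\<lambda>m. (s, i, m)) ` {..<nat (- A s i)})"
    by (force simp: arrows_into_def is_arrow_def tgt_def)
  moreover have "finite (\<Union>s\<in>(UNIV::'i::{finite,linorder} set). (\<lambda>m. (s, i, m)) ` {..<nat (- A s i)})" by auto
  ultimately show ?thesis by (rule finite_subset)
qed

lemma rev_rev[simp]: "rev_arrow (rev_arrow b) = b"
  by (cases b) (auto simp: rev_arrow_def)
lemma src_rev[simp]: "src (rev_arrow b) = tgt b" by (cases b) (auto simp: rev_arrow_def src_def tgt_def)
lemma tgt_rev[simp]: "tgt (rev_arrow b) = src b" by (cases b) (auto simp: rev_arrow_def src_def tgt_def)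
lemma eps_sq[simp]: "eps b * eps b = 1" by (simp add: eps_def)
lemma eps_nz[simp]: "eps b \<noteq> 0" by (simp add: eps_def)

lemma is_arrow_rev: "is_graph_cartan A \<Longrightarrow> is_arrow A b \<Longrightarrow> is_arrow A (rev_arrow b)"
  by (cases b) (auto simp: is_graph_cartan_def is_arrow_def rev_arrow_def)

lemma arrow_neq: "is_arrow A b \<Longrightarrow> src b \<noteq> tgt b"
  by (cases b) (auto simp: is_arrow_def src_def tgt_def)

lemma rev_into: "is_graph_cartan A \<Longrightarrow> rev_arrow ` arrows_from A i = arrows_into A i"
proof -
  assume c: "is_graph_cartan A"
  have a: "rev_arrow b \<in> arrows_into A i" if "b \<in> arrows_from A i" for b
    using that is_arrow_rev[OF c, of b] unfolding arrows_from_def arrows_into_def by simp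
  have b: "b \<in> rev_arrow ` arrows_from A i" if "b \<in> arrows_into A i" for b
  proof -
    have "rev_arrow b \<in> arrows_from A i"
      using that is_arrow_rev[OF c, of b] unfolding arrows_from_def arrows_into_def by simp
    then show ?thesis by (metis image_eqI rev_rev)
  qed
  from a b show ?thesis by blast
qed

lemma inj_rev: "inj rev_arrow" by (rule injI) (metis rev_rev)

lemma sum_into_from: "is_graph_cartan A \<Longrightarrow> (\<Sum>b\<in>arrows_into A i. f b) = (\<Sum>b\<in>arrows_from A i. f (rev_arrow b))"
proof -
  assume c: "is_graph_cartan A"
  have "(\<Sum>b\<in>rev_arrow ` arrows_from A i. f b) = (\<Sum>b\<in>arrows_from A i. f (rev_arrow b))"
  proof -
    have "inj_on rev_arrow (arrows_from A i)" using inj_rev by (rule inj_on_subset) simp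
    from sum.reindex[OF this, of f] show ?thesis by simp
  qed
  then show ?thesis using rev_into[OF c] by simp
qed

lemma qhullD:
  assumes "F \<in> qhull A i k"
  shows "\<forall>p. F p \<noteq> 0 \<longrightarrow> is_path A k i p" "\<exists>N. \<forall>p. N < length p \<longrightarrow> F p = 0"
    "\<And>p v q. (\<Sum>b\<in>arrows_from A v. eps b * F (p @ [b, rev_arrow b] @ q)) = 0"
  using assms unfolding qhull_def mem_Collect_eq by blast+

lemma qhullI:
  assumes "\<forall>p. F p \<noteq> 0 \<longrightarrow> is_path A k i p" "\<exists>N. \<forall>p. N < length p \<longrightarrow> F p = 0"
    "\<And>p v q. (\<Sum>b\<in>arrows_from A v. eps b * F (p @ [b, rev_arrow b] @ q)) = 0"
  shows "F \<in> qhull A i k"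
  using assms unfolding qhull_def mem_Collect_eq by blast

lemma qhull_add: "F \<in> qhull A i k \<Longrightarrow> G \<in> qhull A i k \<Longrightarrow> F + G \<in> qhull A i k"
proof -
  assume F: "F \<in> qhull A i k" and G: "G \<in> qhull A i k"
  obtain N1 where N1: "\<forall>p. N1 < length p \<longrightarrow> F p = 0" using qhullD(2)[OF F] by blast
  obtain N2 where N2: "\<forall>p. N2 < length p \<longrightarrow> G p = 0" using qhullD(2)[OF G] by blast
  show ?thesis
  proof (rule qhullI)
    show "\<exists>N. \<forall>p. N < length p \<longrightarrow> (F + G) p = 0"
      by (rule exI[of _ "max N1 N2"]) (simp add: N1 N2)
    show "\<forall>p. (F + G) p \<noteq> 0 \<longrightarrow> is_path A k i p"
    proof (intro allI impI)
      fix p assume "(F + G) p \<noteq> 0"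
      then have "F p \<noteq> 0 \<or> G p \<noteq> 0" by auto
      then show "is_path A k i p" using qhullD(1)[OF F] qhullD(1)[OF G] by blast
    qed
    show "(\<Sum>b\<in>arrows_from A v. eps b * (F + G) (p @ [b, rev_arrow b] @ q)) = 0" for p v q
      using qhullD(3)[OF F, where p=p and v=v and q=q] qhullD(3)[OF G, where p=p and v=v and q=q]
      by (simp add: distrib_left sum.distrib)
  qed
qed

lemma qhull_sc: "F \<in> qhull A i k \<Longrightarrow> (\<lambda>p. c * F p) \<in> qhull A i k"
proof -
  assume F: "F \<in> qhull A i k"
  show ?thesis
  proof (rule qhullI)
    show "\<exists>N. \<forall>p. N < length p \<longrightarrow> c * F p = 0" using qhullD(2)[OF F] by auto
    show "\<forall>p. c * F p \<noteq> 0 \<longrightarrow> is_path A k i p" using qhullD(1)[OF F] by auto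
    show "(\<Sum>b\<in>arrows_from A v. eps b * (c * F (p @ [b, rev_arrow b] @ q))) = 0" for p v q
    proof -
      have "(\<Sum>b\<in>arrows_from A v. eps b * (c * F (p @ [b, rev_arrow b] @ q)))
          = c * (\<Sum>b\<in>arrows_from A v. eps b * F (p @ [b, rev_arrow b] @ q))"
        by (simp add: sum_distrib_left mult.left_commute mult.commute)
      then show ?thesis using qhullD(3)[OF F, where p=p and v=v and q=q] by simp
    qed
  qed
qed

lemma qhull_0: "(0::'i::{finite,linorder} path \<Rightarrow> complex) \<in> qhull A i k"
  by (rule qhullI) auto

lemma qlamD: "F \<in> qlam A lam k \<Longrightarrow> r < lam i \<Longrightarrow> F (i, r) \<in> qhull A i k"
  "F \<in> qlam A lam k \<Longrightarrow> \<not> r < lam i \<Longrightarrow> F (i, r) = 0"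
  unfolding qlam_def by blast+

lemma qlamI: "(\<And>i r. r < lam i \<Longrightarrow> F (i, r) \<in> qhull A i k) \<Longrightarrow> (\<And>i r. \<not> r < lam i \<Longrightarrow> F (i, r) = 0)
   \<Longrightarrow> F \<in> qlam A lam k"
  unfolding qlam_def by blast

lemma qlam_subspace: "Q.subspace (qlam A lam k)"
  unfolding Q.subspace_def
proof (intro conjI ballI allI)
  show "0 \<in> qlam A lam k"
  proof (rule qlamI)
    fix i r show "(0::'a qelem) (i, r) \<in> qhull A i k" using qhull_0 by (simp add: zero_fun_def)
  qed (simp add: zero_fun_def)
  show "x + y \<in> qlam A lam k" if xy: "x \<in> qlam A lam k" "y \<in> qlam A lam k" for x y
  proof (rule qlamI)
    fix i r assume "r < lam i"
    then have "x (i, r) + y (i, r) \<in> qhull A i k" using qlamD(1)[OF xy(1)] qlamD(1)[OF xy(2)] qhull_add by blast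
    then show "(x + y) (i, r) \<in> qhull A i k" by simp
  next
    fix i r assume "\<not> r < lam i"
    then show "(x + y) (i, r) = 0" using qlamD(2)[OF xy(1)] qlamD(2)[OF xy(2)] by simp
  qed
  show "sc c x \<in> qlam A lam k" if x: "x \<in> qlam A lam k" for x c
  proof (rule qlamI)
    fix i r assume "r < lam i"
    then have "(\<lambda>p. c * x (i, r) p) \<in> qhull A i k" using qlamD(1)[OF x] qhull_sc by blast
    moreover have "sc c x (i, r) = (\<lambda>p. c * x (i, r) p)" by (simp add: sc_def)
    ultimately show "sc c x (i, r) \<in> qhull A i k" by simp
  next
    fix i r assume "\<not> r < lam i"
    then show "sc c x (i, r) = 0" using qlamD(2)[OF x] by (simp add: sc_def zero_fun_def)
  qed
qed

interpretation QQ: vector_space_pair "sc :: complex \<Rightarrow> 'i qelem \<Rightarrow> 'i qelem" sc ..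

definition SS :: "('i::{finite,linorder} \<Rightarrow> 'i \<Rightarrow> int) \<Rightarrow> ('i \<Rightarrow> nat) \<Rightarrow> ('i \<Rightarrow> 'i qelem set) \<Rightarrow> 'i \<Rightarrow> 'i qelem set" where
  "SS A lam Z i = {F \<in> qlam A lam i. \<forall>b\<in>arrows_from A i. act b F \<in> Z (tgt b)}"

definition RR :: "('i::{finite,linorder} \<Rightarrow> 'i \<Rightarrow> int) \<Rightarrow> ('i \<Rightarrow> 'i qelem set) \<Rightarrow> 'i \<Rightarrow> 'i qelem set" where
  "RR A Z i = cspan (\<Union>b\<in>arrows_into A i. act b ` Z (src b))"

lemma SS_subspace:
  assumes Zs: "\<forall>k. Q.subspace (Z k)"
  shows "Q.subspace (SS A lam Z i)"
  unfolding Q.subspace_def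
proof (intro conjI ballI allI)
  note qs = qlam_subspace[of A lam i]
  show "0 \<in> SS A lam Z i"
    using Q.subspace_0[OF qs] Zs Q.subspace_0 by (auto simp: SS_def)
  show "x + y \<in> SS A lam Z i" if x: "x \<in> SS A lam Z i" and y: "y \<in> SS A lam Z i" for x y
  proof -
    have "x + y \<in> qlam A lam i" using x y Q.subspace_add[OF qs] by (auto simp: SS_def)
    moreover have "act b (x + y) \<in> Z (tgt b)" if b: "b \<in> arrows_from A i" for b
      using x y b Q.subspace_add[OF Zs[rule_format, of "tgt b"]] by (auto simp: SS_def act_add)
    ultimately show ?thesis by (simp add: SS_def)
  qed
  show "sc c x \<in> SS A lam Z i" if x: "x \<in> SS A lam Z i" for c x
  proof -
    have "sc c x \<in> qlam A lam i" using x Q.subspace_scale[OF qs] by (auto simp: SS_def)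
    moreover have "act b (sc c x) \<in> Z (tgt b)" if b: "b \<in> arrows_from A i" for b
      using x b Q.subspace_scale[OF Zs[rule_format, of "tgt b"]] by (auto simp: SS_def act_sc)
    ultimately show ?thesis by (simp add: SS_def)
  qed
qed

definition lift :: "'i arrow \<Rightarrow> 'i qelem \<Rightarrow> 'i qelem" where
  "lift b G = (\<lambda>ir p. case p of [] \<Rightarrow> 0 | b' # p' \<Rightarrow> if b' = b then G ir p' else 0)"

lemma lift_lin: "Vector_Spaces.linear sc sc (lift b)"
  unfolding Vector_Spaces.linear_iff using vs_sc
  by (auto simp: fun_eq_iff lift_def split: list.split)

definition ee :: "'i \<Rightarrow> nat \<Rightarrow> 'i qelem" where
  "ee i r = (\<lambda>ir p. if ir = (i, r) \<and> p = [] then 1 else 0)"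

lemma SS_decomp:
  fixes A :: "'i::{finite,linorder} \<Rightarrow> 'i \<Rightarrow> int"
  assumes F: "F \<in> qlam A lam i"
  shows "F = (\<Sum>r<lam i. sc (F (i, r) []) (ee i r)) + (\<Sum>b\<in>arrows_from A i. lift b (act b F))"
proof (rule ext, rule ext)
  fix ir :: "'i \<times> nat" and p :: "'i path"
  obtain i' r' where ir: "ir = (i', r')" by (cases ir)
  show "F ir p = ((\<Sum>r<lam i. sc (F (i, r) []) (ee i r)) + (\<Sum>b\<in>arrows_from A i. lift b (act b F))) ir p"
  proof (cases p)
    case Nil
    have "(\<Sum>r<lam i. sc (F (i, r) []) (ee i r)) ir p = (\<Sum>r<lam i. if r = r' \<and> i = i' then F (i, r) [] else 0)"
      using Nil ir by (simp add: sum_app ee_def) (rule sum.cong, auto)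
    also have "\<dots> = (if r' < lam i \<and> i = i' then F (i, r') [] else 0)"
    proof (cases "i = i'")
      case True then show ?thesis by (simp add: sum.delta)
    next
      case False then show ?thesis by simp
    qed
    finally have e1: "(\<Sum>r<lam i. sc (F (i, r) []) (ee i r)) ir p = (if r' < lam i \<and> i = i' then F (i, r') [] else 0)" .
    have e2: "(\<Sum>b\<in>arrows_from A i. lift b (act b F)) ir p = 0"
      using Nil by (simp add: sum_app lift_def)
    have "F ir p = (if r' < lam i \<and> i = i' then F (i, r') [] else 0)"
    proof (cases "r' < lam i'")
      case True
      then have "F (i', r') \<in> qhull A i' i" using qlamD(1)[OF F] by blast
      then have "F (i', r') [] \<noteq> 0 \<longrightarrow> is_path A i i' []" using qhullD(1) by blast
      then show ?thesis using Nil ir True by auto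
    next
      case False
      then show ?thesis using qlamD(2)[OF F False] Nil ir by auto
    qed
    then show ?thesis using e1 e2 by simp
  next
    case (Cons b' p')
    have e1: "(\<Sum>r<lam i. sc (F (i, r) []) (ee i r)) ir p = 0"
      using Cons by (simp add: sum_app ee_def)
    have "(\<Sum>b\<in>arrows_from A i. lift b (act b F)) ir p = (\<Sum>b\<in>arrows_from A i. if b = b' then F ir (b' # p') else 0)"
      using Cons by (simp add: sum_app lift_def) (rule sum.cong, auto)
    also have "\<dots> = (if b' \<in> arrows_from A i then F ir (b' # p') else 0)"
      by (simp add: sum.delta[OF finite_arrows_from])
    finally have e2: "(\<Sum>b\<in>arrows_from A i. lift b (act b F)) ir p = (if b' \<in> arrows_from A i then F ir (b' # p') else 0)" .
    have "F ir p = (if b' \<in> arrows_from A i then F ir (b' # p') else 0)"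
    proof (cases "r' < lam i'")
      case True
      then have "F (i', r') \<in> qhull A i' i" using qlamD(1)[OF F] by blast
      then have "F (i', r') (b' # p') \<noteq> 0 \<longrightarrow> is_path A i i' (b' # p')" using qhullD(1) by blast
      then show ?thesis using Cons ir by (auto simp: arrows_from_def)
    next
      case False
      then show ?thesis using qlamD(2)[OF F False] Cons ir by auto
    qed
    then show ?thesis using e1 e2 by simp
  qed
qed

lemma SS_findim:
  assumes Zb: "\<And>k. Z k \<subseteq> Q.span (BZ k)" and fZ: "\<And>k. finite (BZ k)"
  shows "\<exists>G. finite G \<and> SS A lam Z i \<subseteq> Q.span G"
proof -
  define G where "G = ee i ` {..<lam i} \<union> (\<Union>b\<in>arrows_from A i. lift b ` BZ (tgt b))"
  have fG: "finite G" unfolding G_def by (intro finite_UnI finite_imageI finite_UN_I finite_lessThan finite_arrows_from fZ ballI)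
  have "F \<in> Q.span G" if F: "F \<in> SS A lam Z i" for F
  proof -
    have Fq: "F \<in> qlam A lam i" using F by (simp add: SS_def)
    have s1: "(\<Sum>r<lam i. sc (F (i, r) []) (ee i r)) \<in> Q.span G"
      by (intro Q.span_sum Q.span_scale Q.span_base) (auto simp: G_def)
    have s2: "(\<Sum>b\<in>arrows_from A i. lift b (act b F)) \<in> Q.span G"
    proof (intro Q.span_sum)
      fix b assume b: "b \<in> arrows_from A i"
      then have "act b F \<in> Q.span (BZ (tgt b))" using F Zb by (auto simp: SS_def)
      then have "lift b (act b F) \<in> Q.span (lift b ` BZ (tgt b))"
        using QQ.linear_span_image[OF lift_lin, of b "BZ (tgt b)"] by auto
      moreover have "Q.span (lift b ` BZ (tgt b)) \<subseteq> Q.span G"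
        using b by (intro Q.span_mono) (auto simp: G_def)
      ultimately show "lift b (act b F) \<in> Q.span G" by auto
    qed
    show ?thesis using SS_decomp[OF Fq] Q.span_add[OF s1 s2] by simp
  qed
  then show ?thesis using fG by blast
qed

lemma RR_findim:
  assumes Zb: "\<And>k. Z k \<subseteq> Q.span (BZ k)" and fZ: "\<And>k. finite (BZ k)"
  shows "RR A Z i \<subseteq> Q.span (\<Union>b\<in>arrows_into A i. act b ` BZ (src b))"
    "finite (\<Union>b\<in>arrows_into A i. act b ` BZ (src b))"
proof -
  show "finite (\<Union>b\<in>arrows_into A i. act b ` BZ (src b))" by (intro finite_imageI finite_UN_I finite_arrows_into fZ ballI)
  have "act b ` Z (src b) \<subseteq> Q.span (\<Union>b\<in>arrows_into A i. act b ` BZ (src b))" if b: "b \<in> arrows_into A i" for b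
  proof -
    have "act b ` Z (src b) \<subseteq> act b ` Q.span (BZ (src b))" using Zb by auto
    also have "\<dots> = Q.span (act b ` BZ (src b))" using QQ.linear_span_image[OF act_lin[of b], of "BZ (src b)"] by simp
    also have "\<dots> \<subseteq> Q.span (\<Union>b\<in>arrows_into A i. act b ` BZ (src b))" using b by (intro Q.span_mono) auto
    finally show ?thesis .
  qed
  then have "(\<Union>b\<in>arrows_into A i. act b ` Z (src b)) \<subseteq> Q.span (\<Union>b\<in>arrows_into A i. act b ` BZ (src b))"
    by (rule UN_least)
  then show "RR A Z i \<subseteq> Q.span (\<Union>b\<in>arrows_into A i. act b ` BZ (src b))"
    unfolding RR_def by (rule Q.span_minimal[OF _ Q.subspace_span])
qed

lemma RR_repr:
  assumes Zs: "\<forall>k. Q.subspace (Z k)" and y: "y \<in> RR A Z i"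
  shows "\<exists>x. (\<forall>b\<in>arrows_into A i. x b \<in> Z (src b)) \<and> y = (\<Sum>b\<in>arrows_into A i. act b (x b))"
proof -
  define Sm where "Sm = {(\<Sum>b\<in>arrows_into A i. act b (x b)) | x. \<forall>b\<in>arrows_into A i. x b \<in> Z (src b)}"
  have sub: "Q.subspace Sm"
    unfolding Q.subspace_def
  proof (intro conjI ballI allI)
    show "0 \<in> Sm" unfolding Sm_def using Zs Q.subspace_0
      by (intro CollectI exI[of _ "\<lambda>b. 0"]) auto
    show "u + w \<in> Sm" if u: "u \<in> Sm" and w: "w \<in> Sm" for u w
    proof -
      obtain x where x: "\<forall>b\<in>arrows_into A i. x b \<in> Z (src b)" "u = (\<Sum>b\<in>arrows_into A i. act b (x b))"
        using u unfolding Sm_def by blast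
      obtain x' where x': "\<forall>b\<in>arrows_into A i. x' b \<in> Z (src b)" "w = (\<Sum>b\<in>arrows_into A i. act b (x' b))"
        using w unfolding Sm_def by blast
      have "u + w = (\<Sum>b\<in>arrows_into A i. act b (x b + x' b))" using x x' by (simp add: act_add sum.distrib)
      moreover have "\<forall>b\<in>arrows_into A i. x b + x' b \<in> Z (src b)" using x x' Zs Q.subspace_add by blast
      ultimately have "\<exists>z. u + w = (\<Sum>b\<in>arrows_into A i. act b (z b)) \<and> (\<forall>b\<in>arrows_into A i. z b \<in> Z (src b))"
        by (intro exI[where x="\<lambda>b. x b + x' b"] conjI)
      then show ?thesis unfolding Sm_def by simp
    qed
    show "sc c u \<in> Sm" if u: "u \<in> Sm" for c u
    proof -
      obtain x where x: "\<forall>b\<in>arrows_into A i. x b \<in> Z (src b)" "u = (\<Sum>b\<in>arrows_into A i. act b (x b))"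
        using u unfolding Sm_def by blast
      have "sc c u = (\<Sum>b\<in>arrows_into A i. act b (sc c (x b)))" using x
        by (simp add: act_sc Q.scale_sum_right)
      moreover have "\<forall>b\<in>arrows_into A i. sc c (x b) \<in> Z (src b)" using x Zs Q.subspace_scale by blast
      ultimately have "\<exists>z. sc c u = (\<Sum>b\<in>arrows_into A i. act b (z b)) \<and> (\<forall>b\<in>arrows_into A i. z b \<in> Z (src b))"
        by (intro exI[where x="\<lambda>b. sc c (x b)"] conjI)
      then show ?thesis unfolding Sm_def by simp
    qed
  qed
  have "act b0 z \<in> Sm" if b0: "b0 \<in> arrows_into A i" and z: "z \<in> Z (src b0)" for b0 z
  proof -
    let ?x = "\<lambda>b. if b = b0 then z else 0"
    have "(\<Sum>b\<in>arrows_into A i. act b (?x b)) = (\<Sum>b\<in>arrows_into A i. if b = b0 then act b0 z else 0)"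
      by (rule sum.cong) auto
    also have "\<dots> = act b0 z" using b0 by (simp add: sum.delta[OF finite_arrows_into])
    finally have "act b0 z = (\<Sum>b\<in>arrows_into A i. act b (?x b))" by simp
    moreover have "\<forall>b\<in>arrows_into A i. ?x b \<in> Z (src b)" using z Zs Q.subspace_0 by auto
    ultimately have "\<exists>zz. act b0 z = (\<Sum>b\<in>arrows_into A i. act b (zz b)) \<and> (\<forall>b\<in>arrows_into A i. zz b \<in> Z (src b))"
      by (intro exI[where x="?x"] conjI)
    then show ?thesis unfolding Sm_def by simp
  qed
  then have "RR A Z i \<subseteq> Sm" unfolding RR_def by (intro Q.span_minimal[OF _ sub]) auto
  then show ?thesis using y unfolding Sm_def by blast
qed

lemma relation:
  assumes F: "F \<in> qlam A lam i"
  shows "(\<Sum>b\<in>arrows_from A i. eps b * F ir (b # rev_arrow b # q)) = 0"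
proof -
  obtain i' r where ir: "ir = (i', r)" by (cases ir)
  show ?thesis
  proof (cases "r < lam i'")
    case True
    then have "F (i', r) \<in> qhull A i' i" using qlamD(1)[OF F] by blast
    from qhullD(3)[OF this, where p="[]" and v=i and q=q] show ?thesis using ir by simp
  next
    case False
    then show ?thesis using qlamD(2)[OF F False] ir by simp
  qed
qed

lemma glue:
  fixes A :: "'i::{finite,linorder} \<Rightarrow> 'i \<Rightarrow> int" and h :: "'i arrow \<Rightarrow> 'i qelem"
  assumes hq: "\<forall>b\<in>arrows_from A i. h b \<in> qlam A lam (tgt b)"
    and rel: "\<forall>ir q. (\<Sum>b\<in>arrows_from A i. eps b * h b ir (rev_arrow b # q)) = 0"
  defines "Fc \<equiv> (\<lambda>ir p. case p of [] \<Rightarrow> 0 | b # p' \<Rightarrow> if b \<in> arrows_from A i then h b ir p' else 0)"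
  shows "Fc \<in> qlam A lam i" "\<forall>b\<in>arrows_from A i. act b Fc = h b"
proof -
  show "\<forall>b\<in>arrows_from A i. act b Fc = h b"
    by (auto simp: Fc_def act_def fun_eq_iff)
  show "Fc \<in> qlam A lam i"
  proof (rule qlamI)
    fix i' r assume r: "\<not> r < lam i'"
    have "h b (i', r) = 0" if "b \<in> arrows_from A i" for b
      using qlamD(2)[OF hq[rule_format, OF that] r] .
    then show "Fc (i', r) = 0" by (auto simp: Fc_def fun_eq_iff split: list.split)
  next
    fix i' r assume r: "r < lam i'"
    have hqh: "h b (i', r) \<in> qhull A i' (tgt b)" if "b \<in> arrows_from A i" for b
      using qlamD(1)[OF hq[rule_format, OF that] r] .
    show "Fc (i', r) \<in> qhull A i' i"
    proof (rule qhullI)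
      show "\<forall>p. Fc (i', r) p \<noteq> 0 \<longrightarrow> is_path A i i' p"
      proof (intro allI impI)
        fix p assume nz: "Fc (i', r) p \<noteq> 0"
        then obtain b p' where p: "p = b # p'" by (cases p) (auto simp: Fc_def)
        with nz have b: "b \<in> arrows_from A i" and hz: "h b (i', r) p' \<noteq> 0"
          by (auto simp: Fc_def split: if_splits)
        from qhullD(1)[OF hqh[OF b]] hz have "is_path A (tgt b) i' p'" by blast
        then show "is_path A i i' p" using p b by (simp add: arrows_from_def)
      qed
      have "\<forall>b\<in>arrows_from A i. \<exists>N. \<forall>p. N < length p \<longrightarrow> h b (i', r) p = 0"
        using qhullD(2)[OF hqh] by blast
      then obtain Nf where Nf: "\<forall>b\<in>arrows_from A i. \<forall>p. Nf b < length p \<longrightarrow> h b (i', r) p = 0"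
        by metis
      show "\<exists>N. \<forall>p. N < length p \<longrightarrow> Fc (i', r) p = 0"
      proof (intro exI[of _ "Suc (\<Sum>b\<in>arrows_from A i. Nf b)"] allI impI)
        fix p :: "'i path" assume len: "Suc (\<Sum>b\<in>arrows_from A i. Nf b) < length p"
        show "Fc (i', r) p = 0"
        proof (cases p)
          case Nil then show ?thesis by (simp add: Fc_def)
        next
          case (Cons b p')
          show ?thesis
          proof (cases "b \<in> arrows_from A i")
            case True
            have "Nf b \<le> (\<Sum>b\<in>arrows_from A i. Nf b)"
              using True finite_arrows_from by (intro member_le_sum) auto
            then have "Nf b < length p'" using len Cons by simp
            then show ?thesis using Nf True Cons by (simp add: Fc_def)
          next
            case False then show ?thesis using Cons by (simp add: Fc_def)
          qed
        qed
      qed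
      show "(\<Sum>b\<in>arrows_from A v. eps b * Fc (i', r) (p @ [b, rev_arrow b] @ q)) = 0" for p v q
      proof (cases p)
        case Nil
        show ?thesis
        proof (cases "v = i")
          case True
          have "(\<Sum>b\<in>arrows_from A v. eps b * Fc (i', r) (p @ [b, rev_arrow b] @ q))
              = (\<Sum>b\<in>arrows_from A i. eps b * h b (i', r) (rev_arrow b # q))"
            using Nil True by (intro sum.cong) (auto simp: Fc_def)
          then show ?thesis using rel by simp
        next
          case False
          have "b \<notin> arrows_from A i" if "b \<in> arrows_from A v" for b
            using that False by (auto simp: arrows_from_def)
          then show ?thesis using Nil by (intro sum.neutral) (auto simp: Fc_def)
        qed
      next
        case (Cons b0 p')
        show ?thesis
        proof (cases "b0 \<in> arrows_from A i")
          case True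
          have "(\<Sum>b\<in>arrows_from A v. eps b * Fc (i', r) (p @ [b, rev_arrow b] @ q))
              = (\<Sum>b\<in>arrows_from A v. eps b * h b0 (i', r) (p' @ [b, rev_arrow b] @ q))"
            using Cons True by (intro sum.cong) (auto simp: Fc_def)
          then show ?thesis using qhullD(3)[OF hqh[OF True], where p=p' and v=v and q=q] by simp
        next
          case False
          then show ?thesis using Cons by (intro sum.neutral) (auto simp: Fc_def)
        qed
      qed
    qed
  qed
qed

definition dl :: "nat \<Rightarrow> nat \<Rightarrow> complex" where "dl m = (\<lambda>k. if k = m then 1 else 0)"

lemma scn_app: "scn a c m = a * c m" by (simp add: scn_def)

lemma Cn_mem: "c \<in> N.span (dl ` {..<n}) \<longleftrightarrow> (\<forall>m. n \<le> m \<longrightarrow> c m = 0)"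
proof
  assume c: "c \<in> N.span (dl ` {..<n})"
  have sub: "N.subspace {c. \<forall>m. n \<le> m \<longrightarrow> c m = 0}"
    unfolding N.subspace_def by (auto simp: scn_def)
  have "dl ` {..<n} \<subseteq> {c. \<forall>m. n \<le> m \<longrightarrow> c m = 0}" by (auto simp: dl_def)
  from N.span_minimal[OF this sub] c show "\<forall>m. n \<le> m \<longrightarrow> c m = 0" by auto
next
  assume c: "\<forall>m. n \<le> m \<longrightarrow> c m = 0"
  have "c = (\<Sum>m<n. scn (c m) (dl m))"
  proof (rule ext)
    fix k
    have "(\<Sum>m<n. scn (c m) (dl m)) k = (\<Sum>m<n. if k = m then c m else 0)"
      unfolding sum_app by (rule sum.cong) (auto simp: dl_def scn_def)
    also have "\<dots> = (if k < n then c k else 0)" by (simp add: sum.delta')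
    also have "\<dots> = c k" using c by auto
    finally show "c k = (\<Sum>m<n. scn (c m) (dl m)) k" by simp
  qed
  also have "\<dots> \<in> N.span (dl ` {..<n})"
    by (intro N.span_sum N.span_scale N.span_base) auto
  finally show "c \<in> N.span (dl ` {..<n})" .
qed

lemma inj_dl: "inj dl"
proof (rule injI)
  fix m m' assume "dl m = dl m'"
  then have "dl m m = dl m' m" by simp
  then show "m = m'" by (simp add: dl_def split: if_splits)
qed

lemma dim_Cn: "N.dim (N.span (dl ` {..<n})) = n"
proof -
  have ind: "N.independent (dl ` {..<n})"
  proof (rule N.independent_if_scalars_zero)
    show "finite (dl ` {..<n})" by simp
    fix f x assume s: "(\<Sum>x\<in>dl ` {..<n}. scn (f x) x) = 0" and x: "x \<in> dl ` {..<n}"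
    then obtain m0 where m0: "m0 < n" "x = dl m0" by auto
    have "0 = (\<Sum>x\<in>dl ` {..<n}. scn (f x) x) m0" using s by simp
    also have "\<dots> = (\<Sum>x\<in>dl ` {..<n}. f x * x m0)" by (simp add: sum_app scn_app)
    also have "\<dots> = (\<Sum>m<n. f (dl m) * dl m m0)"
      using sum.reindex[of dl "{..<n}" "\<lambda>x. f x * x m0"] inj_dl by (simp add: inj_on_def)
    also have "\<dots> = (\<Sum>m<n. if m0 = m then f (dl m) else 0)" by (rule sum.cong) (auto simp: dl_def)
    also have "\<dots> = f (dl m0)" using m0 by (simp add: sum.delta)
    finally show "f x = 0" using m0 by simp
  qed
  have "N.dim (N.span (dl ` {..<n})) = card (dl ` {..<n})"
    using N.dim_span N.dim_eq_card_independent[OF ind] by simp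
  also have "\<dots> = n" using card_image[of dl "{..<n}"] inj_dl by (simp add: inj_on_def)
  finally show ?thesis .
qed

lemma dim_zero_N: "N.dim {0} = 0"
proof -
  have "N.dim {0} = N.dim (N.span {0})" by (rule N.dim_span[symmetric])
  also have "N.span {0} = N.span {}" using N.span_insert_0[of "{}"] by simp
  also have "N.dim (N.span {}) = N.dim {}" by (rule N.dim_span)
  also have "\<dots> = 0" using N.dim_eq_card_independent[OF N.independent_empty] by simp
  finally show ?thesis .
qed

lemma BB_eq:
  fixes A :: "'i::{finite,linorder} \<Rightarrow> 'i \<Rightarrow> int"
  assumes ij: "i \<noteq> j"
  shows "{b\<in>arrows_from A i. tgt b = j} = (\<lambda>m. (i, j, m)) ` {..<nat (- A i j)}"
proof (rule set_eqI)
  fix b :: "'i arrow"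
  obtain s t m where b: "b = (s, t, m)" by (cases b)
  have "b \<in> (\<lambda>m. (i, j, m)) ` {..<nat (- A i j)} \<longleftrightarrow> s = i \<and> t = j \<and> m < nat (- A i j)"
    using b by blast
  moreover have "b \<in> {b\<in>arrows_from A i. tgt b = j} \<longleftrightarrow> s = i \<and> t = j \<and> m < nat (- A i j)"
    using b ij by (simp add: arrows_from_def is_arrow_def src_def tgt_def) blast
  ultimately show "b \<in> {b\<in>arrows_from A i. tgt b = j} \<longleftrightarrow> b \<in> (\<lambda>m. (i, j, m)) ` {..<nat (- A i j)}" by simp
qed

lemma main_neq:
  fixes A :: "'i::{finite,linorder} \<Rightarrow> 'i \<Rightarrow> int" and X Y :: "'i \<Rightarrow> 'i qelem set"
    and l :: "'i qelem \<Rightarrow> complex"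
  assumes cart: "is_graph_cartan A"
    and Xs: "\<forall>k. Q.subspace (X k)" and Xq: "\<forall>k. X k \<subseteq> qlam A lam k"
    and BX: "\<And>k. X k \<subseteq> Q.span (BX k)" "\<And>k. finite (BX k)"
    and XY: "\<forall>k. X k \<subseteq> Y k" and YX: "\<forall>k. k \<noteq> j \<longrightarrow> Y k = X k"
    and v: "v \<in> Y j" "v \<notin> X j" and Yj: "\<forall>y\<in>Y j. \<exists>c. y - sc c v \<in> X j"
    and Ys: "\<forall>k. Q.subspace (Y k)" and vq: "v \<in> qlam A lam j"
    and l: "Vector_Spaces.linear sc (times) l" "\<forall>x\<in>X j. l x = 0" "l v = 1"
    and ij: "i \<noteq> j"
  shows "cdim (SS A lam Y i) + cdim (RR A Y i) = cdim (SS A lam X i) + cdim (RR A X i) + nat (- A i j)"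
proof -
  define n where "n = nat (- A i j)"
  define AF where "AF = arrows_from A i"
  define AI where "AI = arrows_into A i"
  define BB where "BB = {b\<in>AF. tgt b = j}"
  have BBeq: "BB = (\<lambda>m. (i, j, m)) ` {..<n}" unfolding BB_def AF_def n_def by (rule BB_eq[OF ij])
  have fAF: "finite AF" unfolding AF_def by (rule finite_arrows_from)
  have fBB: "finite BB" using fAF BB_def by simp
  define idx :: "'i arrow \<Rightarrow> nat" where "idx b = snd (snd b)" for b
  have BBm: "\<exists>m<n. b = (i, j, m)" if "b \<in> BB" for b using that BBeq by blast
  have idx_eq[simp]: "idx (i, j, m) = m" for m by (simp add: idx_def)
  have BBin: "(i, j, m) \<in> BB" if "m < n" for m using that BBeq by blast
  have BBAF: "BB \<subseteq> AF" unfolding BB_def by blast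
  define Cn where "Cn = N.span (dl ` {..<n})"
  define g where "g c = (\<Sum>b\<in>BB. sc (c (idx b)) (act (rev_arrow b) v))" for c :: "nat \<Rightarrow> complex"
  define th where "th F = (\<lambda>m. if m < n then eps (i, j, m) * l (act (i, j, m) F) else 0)" for F :: "'i qelem"
  define W where "W = {c\<in>Cn. g c \<in> RR A X i}"
  have lin_l_add: "l (x + y) = l x + l y" for x y using QC.linear_add[OF l(1)] .
  have lin_l_sc: "l (sc a x) = a * l x" for a x using QC.linear_scale[OF l(1)] .
  have lin_l_diff: "l (x - y) = l x - l y" for x y using QC.linear_diff[OF l(1)] .
  have g_app: "g c ir q = (\<Sum>b\<in>BB. c (idx b) * v ir (rev_arrow b # q))" for c ir q
    unfolding g_def by (simp add: sum_app)
  have g_lin: "Vector_Spaces.linear scn sc g"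
    unfolding Vector_Spaces.linear_iff
  proof (intro conjI allI)
    show "vector_space scn" by (rule vs_scn)
    show "vector_space sc" by (rule vs_sc)
    show "g (x + y) = g x + g y" for x y
      by (simp add: fun_eq_iff g_app distrib_right sum.distrib)
    show "g (scn c x) = sc c (g x)" for c x
    proof (rule ext, rule ext)
      fix ir q
      have "g (scn c x) ir q = (\<Sum>b\<in>BB. (c * x (idx b)) * v ir (rev_arrow b # q))" by (simp only: g_app scn_def)
      also have "\<dots> = c * (\<Sum>b\<in>BB. x (idx b) * v ir (rev_arrow b # q))"
        by (simp only: sum_distrib_left mult.assoc)
      also have "\<dots> = sc c (g x) ir q" by (simp only: g_app sc_app)
      finally show "g (scn c x) ir q = sc c (g x) ir q" .
    qed
  qed
  have th_lin: "Vector_Spaces.linear sc scn th"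
    unfolding Vector_Spaces.linear_iff
  proof (intro conjI allI)
    show "vector_space scn" by (rule vs_scn)
    show "vector_space sc" by (rule vs_sc)
    show "th (x + y) = th x + th y" for x y
    proof (rule ext)
      fix m show "th (x + y) m = (th x + th y) m"
        by (cases "m < n") (simp_all add: th_def act_add lin_l_add distrib_left)
    qed
    show "th (sc c x) = scn c (th x)" for c x
    proof (rule ext)
      fix m show "th (sc c x) m = scn c (th x) m"
        by (cases "m < n") (simp_all add: th_def act_sc lin_l_sc scn_def mult.left_commute)
    qed
  qed
  have Yj_l: "act b F - sc (l (act b F)) v \<in> X j" if bY: "act b F \<in> Y j" for b F
  proof -
    obtain c where c: "act b F - sc c v \<in> X j" using Yj bY by blast
    have "l (act b F - sc c v) = l (act b F) - c * l v"
      using lin_l_diff[of "act b F" "sc c v"] lin_l_sc[of c v] by simp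
    then have "l (act b F - sc c v) = l (act b F) - c" using l(3) by simp
    moreover have "l (act b F - sc c v) = 0" using l(2) c by blast
    ultimately have "l (act b F) = c" by simp
    then show ?thesis using c by simp
  qed
  have RXs: "Q.subspace (RR A X i)" unfolding RR_def by (rule Q.subspace_span)
  have C2: "{F\<in>SS A lam Y i. th F \<in> {0}} = SS A lam X i"
  proof (rule set_eqI, rule iffI)
    fix F assume F: "F \<in> {F\<in>SS A lam Y i. th F \<in> {0}}"
    then have FY: "F \<in> SS A lam Y i" and th0: "th F = 0" by auto
    have "act b F \<in> X (tgt b)" if b: "b \<in> AF" for b
    proof (cases "tgt b = j")
      case False
      have "act b F \<in> Y (tgt b)" using FY b by (simp add: SS_def AF_def)
      then show ?thesis using YX False by simp
    next
      case True
      then have bB: "b \<in> BB" using b BB_def by simp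
      then obtain m where m: "m < n" "b = (i, j, m)" using BBm by blast
      have ay: "act b F \<in> Y j" using FY b True unfolding SS_def AF_def by force
      have "th F m = 0" using th0 by simp
      then have "eps b * l (act b F) = 0" using m by (simp add: th_def)
      then have "l (act b F) = 0" by simp
      then show ?thesis using Yj_l[OF ay] True by simp
    qed
    then show "F \<in> SS A lam X i" using FY by (simp add: SS_def AF_def)
  next
    fix F assume F: "F \<in> SS A lam X i"
    have FY: "F \<in> SS A lam Y i" using F XY by (auto simp: SS_def)
    have "th F = 0"
    proof (rule ext)
      fix m show "th F m = 0 m"
      proof (cases "m < n")
        case True
        then have "(i, j, m) \<in> AF" using BBin BBAF by blast
        then have "act (i, j, m) F \<in> X (tgt (i, j, m))" using F unfolding SS_def AF_def by blast
        then have "act (i, j, m) F \<in> X j" by (simp add: tgt_def)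
        then show ?thesis using True l(2) by (simp add: th_def)
      next
        case False then show ?thesis by (simp add: th_def)
      qed
    qed
    then show "F \<in> {F\<in>SS A lam Y i. th F \<in> {0}}" using FY by simp
  qed
  have revAI: "rev_arrow b \<in> AF" if "b \<in> AI" for b
  proof -
    from that rev_into[OF cart, of i] obtain b0 where "b0 \<in> AF" "b = rev_arrow b0" unfolding AI_def AF_def by blast
    then show ?thesis by simp
  qed
  have revAF: "rev_arrow b \<in> AI" if "b \<in> AF" for b
    using that rev_into[OF cart, of i] unfolding AI_def AF_def by blast
  have gdl: "g (dl m) = act (rev_arrow (i, j, m)) v" if m: "m < n" for m
  proof -
    have "g (dl m) = (\<Sum>b\<in>BB. if b = (i, j, m) then act (rev_arrow b) v else 0)"
      unfolding g_def
    proof (rule sum.cong)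
      fix b assume b: "b \<in> BB"
      then obtain m' where m': "m' < n" "b = (i, j, m')" using BBm by blast
      show "sc (dl m (idx b)) (act (rev_arrow b) v) = (if b = (i, j, m) then act (rev_arrow b) v else 0)"
        using m' by (auto simp: dl_def sc_def fun_eq_iff)
    qed simp
    also have "\<dots> = act (rev_arrow (i, j, m)) v" using BBin[OF m] fBB by (simp add: sum.delta)
    finally show ?thesis .
  qed
  have C3: "Q.span (RR A X i \<union> g ` Cn) = RR A Y i"
  proof
    show "Q.span (RR A X i \<union> g ` Cn) \<subseteq> RR A Y i"
    proof (rule Q.span_minimal)
      show "Q.subspace (RR A Y i)" unfolding RR_def by (rule Q.subspace_span)
      have "RR A X i \<subseteq> RR A Y i" unfolding RR_def using XY by (intro Q.span_mono) blast
      moreover have "g c \<in> RR A Y i" for c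
        unfolding g_def RR_def
      proof (intro Q.span_sum Q.span_scale Q.span_base)
        fix b assume b: "b \<in> BB"
        then have "rev_arrow b \<in> arrows_into A i" using revAF BBAF AI_def by blast
        moreover have "v \<in> Y (src (rev_arrow b))" using b v(1) BB_def by simp
        ultimately show "act (rev_arrow b) v \<in> (\<Union>b\<in>arrows_into A i. act b ` Y (src b))" by blast
      qed
      ultimately show "RR A X i \<union> g ` Cn \<subseteq> RR A Y i" by blast
    qed
    show "RR A Y i \<subseteq> Q.span (RR A X i \<union> g ` Cn)"
      unfolding RR_def[of A Y]
    proof (rule Q.span_minimal[OF _ Q.subspace_span], rule UN_least, rule image_subsetI)
      fix b y assume b: "b \<in> arrows_into A i" and y: "y \<in> Y (src b)"
      have inRX: "act b x \<in> Q.span (RR A X i \<union> g ` Cn)" if x: "x \<in> X (src b)" for x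
      proof -
        have "act b x \<in> RR A X i" unfolding RR_def using b x by (intro Q.span_base) blast
        then show ?thesis by (intro Q.span_base) blast
      qed
      show "act b y \<in> Q.span (RR A X i \<union> g ` Cn)"
      proof (cases "src b = j")
        case False
        then show ?thesis using y YX inRX by simp
      next
        case True
        obtain c where c: "y - sc c v \<in> X j" using Yj y True by blast
        have b0: "rev_arrow b \<in> BB" using revAI b True AI_def BB_def by simp
        then obtain m where m: "m < n" "rev_arrow b = (i, j, m)" using BBm by blast
        have "act b v = g (dl m)" using gdl[OF m(1)] m(2) by (metis rev_rev)
        moreover have "dl m \<in> Cn" unfolding Cn_def using m(1) by (intro N.span_base) blast
        ultimately have "act b v \<in> Q.span (RR A X i \<union> g ` Cn)" by (intro Q.span_base) blast
        then have "sc c (act b v) \<in> Q.span (RR A X i \<union> g ` Cn)" by (rule Q.span_scale)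
        moreover have "act b (y - sc c v) \<in> Q.span (RR A X i \<union> g ` Cn)" using inRX c True by simp
        ultimately have "act b (y - sc c v) + sc c (act b v) \<in> Q.span (RR A X i \<union> g ` Cn)"
          by (intro Q.span_add)
        moreover have "act b (y - sc c v) + sc c (act b v) = act b y" by (simp add: act_diff act_sc)
        ultimately show ?thesis by simp
      qed
    qed
  qed
  have C1: "th ` SS A lam Y i = W"
  proof
    show "th ` SS A lam Y i \<subseteq> W"
    proof (rule image_subsetI)
      fix F assume FY: "F \<in> SS A lam Y i"
      have Fq: "F \<in> qlam A lam i" using FY by (simp add: SS_def)
      have FYb: "act b F \<in> Y (tgt b)" if "b \<in> AF" for b using FY that unfolding SS_def AF_def by blast
      have thC: "th F \<in> Cn" unfolding Cn_def Cn_mem th_def by simp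
      define rho where "rho b = act b F - (if tgt b = j then sc (l (act b F)) v else 0)" for b
      have rhoX: "rho b \<in> X (tgt b)" if b: "b \<in> AF" for b
      proof (cases "tgt b = j")
        case True then show ?thesis using Yj_l[of b F] FYb[OF b] by (simp add: rho_def)
      next
        case False then show ?thesis using FYb[OF b] YX by (simp add: rho_def)
      qed
      define E where "E = (\<Sum>b\<in>AF. sc (eps b) (act (rev_arrow b) (rho b)))"
      have EX: "E \<in> RR A X i" unfolding E_def RR_def
      proof (intro Q.span_sum Q.span_scale Q.span_base)
        fix b assume b: "b \<in> AF"
        have "rev_arrow b \<in> arrows_into A i" using revAF[OF b] AI_def by simp
        moreover have "rho b \<in> X (src (rev_arrow b))" using rhoX[OF b] by simp
        ultimately show "act (rev_arrow b) (rho b) \<in> (\<Union>b\<in>arrows_into A i. act b ` X (src b))" by blast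
      qed
      have eq: "g (th F) = - E"
      proof (rule ext, rule ext)
        fix ir q
        have rel0: "(\<Sum>b\<in>AF. eps b * F ir (b # rev_arrow b # q)) = 0" using relation[OF Fq] AF_def by simp
        have r1: "eps b * rho b ir (rev_arrow b # q) = eps b * F ir (b # rev_arrow b # q)
              - (if tgt b = j then eps b * l (act b F) * v ir (rev_arrow b # q) else 0)" for b
        proof (cases "tgt b = j")
          case True
          have "rho b ir (rev_arrow b # q) = F ir (b # rev_arrow b # q) - l (act b F) * v ir (rev_arrow b # q)"
            by (simp only: rho_def True simp_thms if_True minus_apply act_app sc_app)
          then show ?thesis by (simp only: True simp_thms if_True right_diff_distrib mult.assoc)
        next
          case False
          have "rho b ir (rev_arrow b # q) = F ir (b # rev_arrow b # q)"
            by (simp only: rho_def False if_False minus_apply act_app zero_fun_apply diff_zero)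
          then show ?thesis using False by simp
        qed
        have "E ir q = (\<Sum>b\<in>AF. eps b * rho b ir (rev_arrow b # q))" by (simp add: E_def sum_app)
        also have "\<dots> = (\<Sum>b\<in>AF. eps b * F ir (b # rev_arrow b # q))
            - (\<Sum>b\<in>AF. if tgt b = j then eps b * l (act b F) * v ir (rev_arrow b # q) else 0)"
          by (simp only: r1 sum_subtractf)
        also have "(\<Sum>b\<in>AF. if tgt b = j then eps b * l (act b F) * v ir (rev_arrow b # q) else 0)
            = (\<Sum>b\<in>BB. eps b * l (act b F) * v ir (rev_arrow b # q))"
          unfolding BB_def by (rule sum.inter_filter[OF fAF, symmetric])
        also have "\<dots> = g (th F) ir q" unfolding g_app
        proof (rule sum.cong)
          fix b assume b: "b \<in> BB"
          then obtain m where m: "m < n" "b = (i, j, m)" using BBm by blast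
          show "eps b * l (act b F) * v ir (rev_arrow b # q) = th F (idx b) * v ir (rev_arrow b # q)"
            using m by (simp add: th_def)
        qed simp
        finally show "g (th F) ir q = (- E) ir q" using rel0 by simp
      qed
      have "g (th F) \<in> RR A X i" unfolding eq using EX RXs Q.subspace_neg by blast
      then show "th F \<in> W" using thC W_def by simp
    qed
    show "W \<subseteq> th ` SS A lam Y i"
    proof
      fix c assume cW: "c \<in> W"
      then have cC: "c \<in> Cn" and gc: "g c \<in> RR A X i" by (simp_all add: W_def)
      have c0: "\<forall>m. n \<le> m \<longrightarrow> c m = 0" using cC Cn_mem Cn_def by simp
      obtain x where x: "\<forall>b\<in>AI. x b \<in> X (src b)" "g c = (\<Sum>b\<in>AI. act b (x b))"
        using RR_repr[OF Xs gc] unfolding AI_def by blast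
      have xr: "x (rev_arrow b) \<in> X (tgt b)" if "b \<in> AF" for b using x(1) revAF[OF that] by fastforce
      define h where "h b = (if tgt b = j then sc (c (idx b) * eps b) v else 0) - sc (eps b) (x (rev_arrow b))" for b
      have hq: "\<forall>b\<in>arrows_from A i. h b \<in> qlam A lam (tgt b)"
      proof
        fix b assume b: "b \<in> arrows_from A i"
        note qs = qlam_subspace[of A lam "tgt b"]
        have "x (rev_arrow b) \<in> qlam A lam (tgt b)" using xr b AF_def Xq by blast
        then have t2: "sc (eps b) (x (rev_arrow b)) \<in> qlam A lam (tgt b)" by (rule Q.subspace_scale[OF qs])
        have t1: "(if tgt b = j then sc (c (idx b) * eps b) v else 0) \<in> qlam A lam (tgt b)"
          using Q.subspace_scale[OF qs] Q.subspace_0[OF qs] vq by auto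
        show "h b \<in> qlam A lam (tgt b)" unfolding h_def by (rule Q.subspace_diff[OF qs t1 t2])
      qed
      have hY: "h b \<in> Y (tgt b)" if b: "b \<in> AF" for b
      proof -
        note qs = Ys[rule_format, of "tgt b"]
        have "x (rev_arrow b) \<in> Y (tgt b)" using xr b XY by blast
        then have t2: "sc (eps b) (x (rev_arrow b)) \<in> Y (tgt b)" by (rule Q.subspace_scale[OF qs])
        have t1: "(if tgt b = j then sc (c (idx b) * eps b) v else 0) \<in> Y (tgt b)"
          using Q.subspace_scale[OF qs] Q.subspace_0[OF qs] v(1) by auto
        show "h b \<in> Y (tgt b)" unfolding h_def by (rule Q.subspace_diff[OF qs t1 t2])
      qed
      have rel: "\<forall>ir q. (\<Sum>b\<in>arrows_from A i. eps b * h b ir (rev_arrow b # q)) = 0"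
      proof (intro allI)
        fix ir q
        have r1: "eps b * h b ir (rev_arrow b # q) = (if tgt b = j then c (idx b) * v ir (rev_arrow b # q) else 0)
             - x (rev_arrow b) ir (rev_arrow b # q)" for b
        proof (cases "tgt b = j")
          case True
          have "h b ir (rev_arrow b # q) = c (idx b) * eps b * v ir (rev_arrow b # q) - eps b * x (rev_arrow b) ir (rev_arrow b # q)"
            by (simp only: h_def True simp_thms if_True minus_apply sc_app)
          then have "eps b * h b ir (rev_arrow b # q) = (eps b * eps b) * c (idx b) * v ir (rev_arrow b # q)
              - (eps b * eps b) * x (rev_arrow b) ir (rev_arrow b # q)" by algebra
          then show ?thesis by (simp only: eps_sq mult_1 True simp_thms if_True)
        next
          case False
          have "h b ir (rev_arrow b # q) = 0 - eps b * x (rev_arrow b) ir (rev_arrow b # q)"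
            by (simp only: h_def False if_False minus_apply sc_app zero_fun_apply)
          then have "eps b * h b ir (rev_arrow b # q) = 0 - (eps b * eps b) * x (rev_arrow b) ir (rev_arrow b # q)" by algebra
          then show ?thesis by (simp only: eps_sq mult_1 False if_False)
        qed
        have "(\<Sum>b\<in>arrows_from A i. eps b * h b ir (rev_arrow b # q))
            = (\<Sum>b\<in>AF. if tgt b = j then c (idx b) * v ir (rev_arrow b # q) else 0)
              - (\<Sum>b\<in>AF. x (rev_arrow b) ir (rev_arrow b # q))"
          unfolding AF_def by (simp only: r1 sum_subtractf)
        also have "(\<Sum>b\<in>AF. if tgt b = j then c (idx b) * v ir (rev_arrow b # q) else 0) = g c ir q"
          unfolding g_app BB_def by (rule sum.inter_filter[OF fAF, symmetric])
        also have "(\<Sum>b\<in>AF. x (rev_arrow b) ir (rev_arrow b # q)) = (\<Sum>b\<in>AI. x b ir (b # q))"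
          unfolding AI_def AF_def by (rule sum_into_from[OF cart, symmetric])
        also have "\<dots> = g c ir q" unfolding x(2) by (simp add: sum_app)
        finally show "(\<Sum>b\<in>arrows_from A i. eps b * h b ir (rev_arrow b # q)) = 0" by simp
      qed
      define Fc where "Fc = (\<lambda>ir p. case p of [] \<Rightarrow> 0 | b # p' \<Rightarrow> if b \<in> arrows_from A i then h b ir p' else 0)"
      have Fcq: "Fc \<in> qlam A lam i" using glue(1)[OF hq rel] unfolding Fc_def .
      have Fch: "\<forall>b\<in>AF. act b Fc = h b" using glue(2)[OF hq rel] unfolding Fc_def AF_def .
      have FcS: "Fc \<in> SS A lam Y i" unfolding SS_def using Fcq Fch hY AF_def by simp
      have "th Fc = c"
      proof (rule ext)
        fix m show "th Fc m = c m"
        proof (cases "m < n")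
          case True
          let ?b = "(i, j, m)"
          have bAF: "?b \<in> AF" using BBin[OF True] BBAF by blast
          have tb: "tgt ?b = j" by (simp add: tgt_def)
          have xj: "x (rev_arrow ?b) \<in> X j" using xr[OF bAF] unfolding tb .
          have lx: "l (x (rev_arrow ?b)) = 0" using l(2) xj by blast
          have hb: "h ?b = sc (c m * eps ?b) v - sc (eps ?b) (x (rev_arrow ?b))"
            by (simp only: h_def tb simp_thms if_True idx_eq)
          have "l (h ?b) = c m * eps ?b * l v - eps ?b * l (x (rev_arrow ?b))"
            by (simp only: hb lin_l_diff lin_l_sc)
          also have "\<dots> = c m * eps ?b" by (simp only: l(3) lx mult_1_right mult_zero_right diff_zero)
          finally have lh: "l (h ?b) = c m * eps ?b" .
          have ab: "act ?b Fc = h ?b" using Fch bAF by blast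
          have "th Fc m = eps ?b * l (act ?b Fc)" by (simp only: th_def True if_True)
          also have "\<dots> = eps ?b * (c m * eps ?b)" by (simp only: ab lh)
          also have "\<dots> = c m" using eps_sq[of ?b] by algebra
          finally show ?thesis .
        next
          case False then show ?thesis using c0 by (simp add: th_def)
        qed
      qed
      then show "c \<in> th ` SS A lam Y i" using FcS by blast
    qed
  qed
  define BY where "BY k = (if k = j then insert v (BX j) else BX k)" for k
  have BY: "Y k \<subseteq> Q.span (BY k)" "finite (BY k)" for k
  proof -
    show "finite (BY k)" using BX(2) by (simp add: BY_def)
    show "Y k \<subseteq> Q.span (BY k)"
    proof (cases "k = j")
      case False then show ?thesis using YX BX(1) by (simp add: BY_def)
    next
      case True
      show ?thesis
      proof
        fix y assume y: "y \<in> Y k"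
        obtain c where c: "y - sc c v \<in> X j" using Yj y True by blast
        then have "y - sc c v \<in> Q.span (BX j)" using BX(1) by blast
        then have "y \<in> Q.span (insert v (BX j))" unfolding Q.span_insert by blast
        then show "y \<in> Q.span (BY k)" using True by (simp add: BY_def)
      qed
    qed
  qed
  have "\<exists>G. finite G \<and> SS A lam Y i \<subseteq> Q.span G"
    by (rule SS_findim[where Z=Y and BZ=BY]) (rule BY(1), rule BY(2))
  then obtain GY where GY: "finite GY" "SS A lam Y i \<subseteq> Q.span GY" by (elim exE conjE)
  note RX = RR_findim[where Z=X and BZ=BX and A=A and i=i, OF BX]
  have SSYs: "Q.subspace (SS A lam Y i)" using SS_subspace Ys by blast
  have E1: "N.dim (N.span ({0} \<union> th ` SS A lam Y i)) + Q.dim {F\<in>SS A lam Y i. th F \<in> {0}}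
      = N.dim {0} + Q.dim (SS A lam Y i)"
    by (rule QN.rrn[OF th_lin SSYs GY(2) GY(1) N.subspace_single_0 _ finite.emptyI]) simp
  have E2: "Q.dim (Q.span (RR A X i \<union> g ` Cn)) + N.dim {c\<in>Cn. g c \<in> RR A X i} = Q.dim (RR A X i) + N.dim Cn"
    by (rule NQ.rrn[OF g_lin _ _ _ RXs RX]) (auto simp: Cn_def N.subspace_span)
  have "N.dim (N.span ({0} \<union> th ` SS A lam Y i)) = N.dim W"
    using C1 N.span_insert_0 N.dim_span by (metis insert_is_Un)
  then have E1': "N.dim W + Q.dim (SS A lam X i) = Q.dim (SS A lam Y i)" using E1 C2 dim_zero_N by simp
  have dCn: "N.dim Cn = n" unfolding Cn_def by (rule dim_Cn)
  have E2': "Q.dim (RR A Y i) + N.dim W = Q.dim (RR A X i) + n"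
    using E2 unfolding C3 W_def[symmetric] dCn .
  show ?thesis using E1' E2' n_def by simp
qed

lemma phii_SS: "phii A lam Y i = int (cdim (SS A lam Y i)) - int (cdim (Y i))"
  by (simp add: phii_def SS_def)
lemma epsi_RR: "epsi A Y i = int (cdim (Y i)) - int (cdim (RR A Y i))"
  by (simp add: epsi_def RR_def)

theorem mainTheorem5:
  fixes A :: "'i::{finite,linorder} \<Rightarrow> 'i \<Rightarrow> int"
    and lam :: "'i \<Rightarrow> nat"
    and X Y :: "'i \<Rightarrow> 'i qelem set"
    and i j :: 'i
  assumes "is_graph_cartan A"
    and "is_submodule A lam X" and "fin_dim_module X" and "nilpotent_module A X"
    and "is_submodule A lam Y"
    and "\<forall>k. X k \<subseteq> Y k"
    and "\<forall>k. k \<noteq> j \<longrightarrow> Y k = X k"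
    and "cdim (Y j) = cdim (X j) + 1"
  shows "phii A lam Y i - epsi A Y i = phii A lam X i - epsi A X i - A i j"
proof -
  note cart = assms(1)
  have Xs: "\<forall>k. Q.subspace (X k)" and Xq: "\<forall>k. X k \<subseteq> qlam A lam k"
    using assms(2) unfolding is_submodule_def by blast+
  have Ys: "\<forall>k. Q.subspace (Y k)" and Yq: "\<forall>k. Y k \<subseteq> qlam A lam k"
    using assms(5) unfolding is_submodule_def by blast+
  note XY = assms(6) and YX = assms(7) and dimY = assms(8)
  obtain BX where BXp: "\<forall>k. finite (BX k) \<and> BX k \<subseteq> X k \<and> Q.span (BX k) = X k"
    using assms(3) unfolding fin_dim_module_def by metis
  have BX: "\<And>k. X k \<subseteq> Q.span (BX k)" "\<And>k. finite (BX k)" using BXp by auto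
  obtain BXj where BXj: "finite BXj" "BXj \<subseteq> X j" "Q.independent BXj" "Q.span BXj = X j" "card BXj = Q.dim (X j)"
    using Q.fd_basis[OF Xs[rule_format, of j] BX(1) BX(2)] by blast
  have "\<not> Y j \<subseteq> X j"
  proof
    assume "Y j \<subseteq> X j"
    then have "Y j = X j" using XY by blast
    then show False using dimY by simp
  qed
  then obtain v where v: "v \<in> Y j" "v \<notin> X j" by blast
  have Yj: "\<forall>y\<in>Y j. \<exists>c. y - sc c v \<in> X j"
  proof
    fix y assume y: "y \<in> Y j"
    have "y \<in> Q.span (insert v BXj)"
    proof (rule ccontr)
      assume ny: "y \<notin> Q.span (insert v BXj)"
      obtain BY where BY: "BY \<subseteq> Y j" "Q.independent BY" "Y j \<subseteq> Q.span BY" "card BY = Q.dim (Y j)"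
        using Q.basis_exists[of "Y j"] by blast
      have "0 < card BY" using BY(4) dimY by simp
      then have fBY: "finite BY" by (rule card_ge_0_finite)
      have vn: "v \<notin> Q.span BXj" using v BXj(4) by simp
      have ind1: "Q.independent (insert v BXj)" using Q.independent_insertI[OF vn BXj(3)] .
      have ind2: "Q.independent (insert y (insert v BXj))" using Q.independent_insertI[OF ny ind1] .
      have sub: "insert y (insert v BXj) \<subseteq> Q.span BY" using y v BXj(2) XY BY(3) by blast
      have "card (insert y (insert v BXj)) \<le> card BY"
        using Q.independent_span_bound[OF fBY ind2 sub] by blast
      moreover have "v \<notin> BXj" using v BXj(2) by blast
      moreover have "y \<notin> insert v BXj" using ny Q.span_base by blast
      ultimately show False using BXj(1,5) BY(4) dimY by simp
    qed
    then obtain k where "y - sc k v \<in> Q.span BXj" unfolding Q.span_insert by blast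
    then show "\<exists>c. y - sc c v \<in> X j" using BXj(4) by blast
  qed
  have vn: "v \<notin> Q.span BXj" using v BXj(4) by simp
  have ind1: "Q.independent (insert v BXj)" using Q.independent_insertI[OF vn BXj(3)] .
  obtain l where l: "Vector_Spaces.linear sc (times) l" "\<forall>x\<in>insert v BXj. l x = (if x = v then 1 else 0)"
    using QC.linear_independent_extend[OF ind1, of "\<lambda>x. if x = v then (1::complex) else 0"] by blast
  have lv: "l v = 1" using l(2) by simp
  have lX: "\<forall>x\<in>X j. l x = 0"
  proof
    fix x assume x: "x \<in> X j"
    have "l b = 0" if "b \<in> BXj" for b using l(2) that v(2) BXj(2) by auto
    then show "l x = 0" using QC.linear_eq_0_on_span[OF l(1)] x BXj(4) by blast
  qed
  have vq: "v \<in> qlam A lam j" using v Yq by blast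
  show ?thesis
  proof (cases "i = j")
    case True
    have SSeq: "SS A lam Y i = SS A lam X i"
    proof -
      have "Y (tgt b) = X (tgt b)" if b: "b \<in> arrows_from A i" for b
      proof -
        have "is_arrow A b" "src b = i" using b by (simp_all add: arrows_from_def)
        then have "tgt b \<noteq> j" using arrow_neq True by metis
        then show ?thesis using YX by simp
      qed
      then show ?thesis by (auto simp: SS_def)
    qed
    have RReq: "RR A Y i = RR A X i"
    proof -
      have "Y (src b) = X (src b)" if b: "b \<in> arrows_into A i" for b
      proof -
        have "is_arrow A b" "tgt b = i" using b by (simp_all add: arrows_into_def)
        then have "src b \<noteq> j" using arrow_neq True by metis
        then show ?thesis using YX by simp
      qed
      then have "(\<Union>b\<in>arrows_into A i. act b ` Y (src b)) = (\<Union>b\<in>arrows_into A i. act b ` X (src b))" by auto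
      then show ?thesis by (simp add: RR_def)
    qed
    have "A i i = 2" using cart by (simp add: is_graph_cartan_def)
    then show ?thesis using True SSeq RReq dimY by (simp add: phii_SS epsi_RR)
  next
    case False
    have M: "cdim (SS A lam Y i) + cdim (RR A Y i) = cdim (SS A lam X i) + cdim (RR A X i) + nat (- A i j)"
      by (rule main_neq[OF cart Xs Xq BX XY YX v Yj Ys vq l(1) lX lv False])
    have "A i j \<le> 0" using cart False by (simp add: is_graph_cartan_def)
    then have nA: "int (nat (- A i j)) = - A i j" by simp
    have Yi: "Y i = X i" using YX False by simp
    have M': "int (cdim (SS A lam Y i)) + int (cdim (RR A Y i)) = int (cdim (SS A lam X i)) + int (cdim (RR A X i)) + int (nat (- A i j))"
      using arg_cong[OF M, of int] by simp
    show ?thesis unfolding phii_SS epsi_RR Yi using M' nA by linarith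
  qed
qed

end
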